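(* Let $a,b$ be positive integers and $c,d$ nonnegative integers, let $W(x)=\operatorname{Asc}(x,a-1)\operatorname{Asc}(x,b-1)\operatorname{Desc}(x,c-1)\operatorname{Desc}(x,d-1)$, $C_{a,b,c,d}=\Psi(x^2W(x))$, and for $n\ge1$ let $M(n)$ be the $n\times n$ matrix with entries $\Psi(x^{i+j+2}W(x))$, $0\le i,j\le n-1$. Then $$\det M(n)=(-q^{c+d})^{\binom n2}q^{\binom n3}C_{a,b,c,d}^{\,n}\prod_{i=1}^{n-1}\left(\frac{[i]_q[a+c+i-1]_q[b+c+i-1]_q[a+d+i-1]_q[b+d+i-1]_q[a+b+c+d+i-2]_q}{[a+b+c+d+2i-3]_q[a+b+c+d+2i-2]_q^2[a+b+c+d+2i-1]_q}\right)^{n-i}.$$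
   Context: $q$ is an indeterminate; work over $\mathbb{Q}(q)$. The $q$-Bernoulli–Carlitz numbers $\beta_n$ are defined by: for all $n\ge0$, $q\sum_{k=0}^{n}\binom{n}{k}q^k\beta_k-\beta_n$ equals $q-1$ if $n=0$, $1$ if $n=1$, $0$ if $n>1$. $\Psi$ is the linear form on $\mathbb{Q}(q)[x]$ with $\Psi(x^n)=\beta_n$. $[m]_q=(q^m-1)/(q-1)$. $\operatorname{Asc}(x,0)=1$ and $\operatorname{Asc}(x,a)=\prod_{i=1}^a([i]_q+q^ix)$ for $a\ge1$; $\operatorname{Desc}(x,-1)=-1/x$, $\operatorname{Desc}(x,0)=1$, $\operatorname{Desc}(x,a)=\prod_{i=1}^a([i]_q-x)$ for $a\ge1$ (so $x^2W(x)$ is a polynomial). *)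

theory Defs
  imports "HOL-Computational_Algebra.Computational_Algebra" "Jordan_Normal_Form.Determinant"
begin

type_synonym qf = "rat poly fract"

definition qq :: qf where "qq = Fract [:0, 1:] 1"

definition qint :: "nat \<Rightarrow> qf" where "qint m = (qq ^ m - 1) / (qq - 1)"

text \<open>q-Bernoulli-Carlitz numbers, obtained by solving the defining relation
  q * sum_{k=0}^n binom(n,k) q^k beta_k - beta_n = rhs n for beta_n
  (the coefficient of beta_n is q^(n+1) - 1, nonzero).\<close>
definition carlitz_rhs :: "nat \<Rightarrow> qf" where
  "carlitz_rhs n = (if n = 0 then qq - 1 else if n = 1 then 1 else 0)"

function beta :: "nat \<Rightarrow> qf" where
  "beta n = (carlitz_rhs n - qq * (\<Sum>k<n. of_nat (n choose k) * qq ^ k * beta k))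
              / (qq ^ (n + 1) - 1)"
  by auto
termination by (relation "measure id") auto

definition Psi :: "qf poly \<Rightarrow> qf" where
  "Psi p = (\<Sum>i\<le>degree p. coeff p i * beta i)"

definition Asc :: "nat \<Rightarrow> qf poly" where
  "Asc m = (\<Prod>i=1..m. [:qint i, qq ^ i:])"

definition Desc :: "nat \<Rightarrow> qf poly" where
  "Desc m = (\<Prod>i=1..m. [:qint i, -1:])"

text \<open>xDesc c = x * Desc(x, c-1) for c a nonnegative integer; for c = 0 this is
  x * (-1/x) = -1.\<close>
definition xDesc :: "nat \<Rightarrow> qf poly" where
  "xDesc c = (if c = 0 then -1 else [:0, 1:] * Desc (c - 1))"

text \<open>x^2 W(x) = Asc(x,a-1) Asc(x,b-1) (x Desc(x,c-1)) (x Desc(x,d-1)).\<close>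
definition x2W :: "nat \<Rightarrow> nat \<Rightarrow> nat \<Rightarrow> nat \<Rightarrow> qf poly" where
  "x2W a b c d = Asc (a - 1) * Asc (b - 1) * xDesc c * xDesc d"

definition Cabcd :: "nat \<Rightarrow> nat \<Rightarrow> nat \<Rightarrow> nat \<Rightarrow> qf" where
  "Cabcd a b c d = Psi (x2W a b c d)"

definition Mmat :: "nat \<Rightarrow> nat \<Rightarrow> nat \<Rightarrow> nat \<Rightarrow> nat \<Rightarrow> qf mat" where
  "Mmat a b c d n = mat n n (\<lambda>(i, j). Psi (monom 1 (i + j) * x2W a b c d))"

end

theory Submission
  imports Defs
begin

lemma qq_pow: "qq ^ m = Fract (monom 1 m) 1"
  by (induct m) (auto simp: qq_def monom_Suc One_fract_def)

lemma qq_nz [simp]: "qq \<noteq> 0"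
  unfolding qq_def by (simp add: Zero_fract_def eq_fract)

lemma qq_pow_ne1: "m > 0 \<Longrightarrow> qq ^ m \<noteq> 1"
proof
  assume m: "m > 0" and "qq ^ m = 1"
  then have "Fract (monom (1::rat) m) 1 = Fract 1 1" by (simp add: qq_pow One_fract_def)
  then have "monom (1::rat) m = 1" by (simp add: eq_fract)
  then have "degree (monom (1::rat) m) = 0" by simp
  then show False using m by (simp add: degree_monom_eq)
qed

lemma qq_ne1 [simp]: "qq \<noteq> 1" using qq_pow_ne1[of 1] by simp

lemma qq_m1_nz [simp]: "qq - 1 \<noteq> 0" by simp

lemma qint_0 [simp]: "qint 0 = 0" by (simp add: qint_def)

lemma qint_Suc: "qint (Suc m) = 1 + qq * qint m"
  by (simp add: qint_def field_simps)

lemma qint_add: "qint (m + n) = qint m + qq ^ m * qint n"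
proof -
  have "qq^(m+n) - 1 = (qq^m - 1) + qq^m*(qq^n-1)" by (simp add: power_add algebra_simps)
  then show ?thesis unfolding qint_def by (simp add: diff_divide_distrib[symmetric] add_divide_distrib[symmetric])
qed

lemma qint_nz: "m > 0 \<Longrightarrow> qint m \<noteq> 0"
  using qq_pow_ne1[of m] by (simp add: qint_def)

lemma qint_1 [simp]: "qint 1 = 1" by (simp add: qint_def)

definition qfact :: "nat \<Rightarrow> qf" where "qfact n = (\<Prod>i=1..n. qint i)"

lemma qfact_0 [simp]: "qfact 0 = 1" by (simp add: qfact_def)
lemma qfact_Suc: "qfact (Suc n) = qfact n * qint (Suc n)"
  by (simp add: qfact_def prod.nat_ivl_Suc' mult.commute)
lemma qfact_nz: "qfact n \<noteq> 0"
  by (simp add: qfact_def qint_nz)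

declare beta.simps[simp del]
lemma Psi_le: "degree p \<le> N \<Longrightarrow> Psi p = (\<Sum>i\<le>N. coeff p i * beta i)"
  unfolding Psi_def
  by (rule sum.mono_neutral_left) (auto simp: coeff_eq_0)

lemma Psi_add: "Psi (p + r) = Psi p + Psi r"
proof -
  let ?N = "max (degree p) (degree r)"
  have "Psi (p + r) = (\<Sum>i\<le>?N. coeff (p + r) i * beta i)"
    by (rule Psi_le) (meson degree_add_le max.cobounded1 max.cobounded2)
  also have "\<dots> = (\<Sum>i\<le>?N. coeff p i * beta i) + (\<Sum>i\<le>?N. coeff r i * beta i)"
    by (simp add: sum.distrib distrib_right)
  also have "\<dots> = Psi p + Psi r" using Psi_le[of p ?N] Psi_le[of r ?N] by simp
  finally show ?thesis .
qed

lemma Psi_0 [simp]: "Psi 0 = 0" by (simp add: Psi_def)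

lemma Psi_smult: "Psi (Polynomial.smult c p) = c * Psi p"
proof -
  have "Psi (Polynomial.smult c p) = (\<Sum>i\<le>degree p. coeff (Polynomial.smult c p) i * beta i)"
    by (rule Psi_le) (simp add: degree_smult_le)
  then show ?thesis by (simp add: Psi_def sum_distrib_left mult.assoc)
qed

lemma Psi_uminus: "Psi (- p) = - Psi p"
  using Psi_smult[of "-1" p] by simp

lemma Psi_diff: "Psi (p - r) = Psi p - Psi r"
  using Psi_add[of p "-r"] by (simp add: Psi_uminus)

lemma Psi_sum: "Psi (\<Sum>i\<in>A. f i) = (\<Sum>i\<in>A. Psi (f i))"
  by (induct A rule: infinite_finite_induct) (auto simp: Psi_add)

lemma Psi_monom: "Psi (monom c n) = c * beta n"
proof -
  have "Psi (monom c n) = (\<Sum>i\<le>n. coeff (monom c n) i * beta i)"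
    by (rule Psi_le) (simp add: degree_monom_le)
  then show ?thesis by (simp add: coeff_monom mult_delta_left sum.delta)
qed

lemma beta_eq: "beta n * (qq ^ (n+1) - 1) =
   carlitz_rhs n - qq * (\<Sum>k<n. of_nat (n choose k) * qq ^ k * beta k)"
proof -
  have "qq ^ (n+1) - 1 \<noteq> 0" using qq_pow_ne1[of "n+1"] by simp
  moreover have "beta n = (carlitz_rhs n - qq * (\<Sum>k<n. of_nat (n choose k) * qq ^ k * beta k))
              / (qq ^ (n + 1) - 1)" by (rule beta.simps)
  ultimately show ?thesis by simp
qed

lemma beta_rel: "qq * (\<Sum>k\<le>n. of_nat (n choose k) * qq ^ k * beta k) - beta n = carlitz_rhs n"
proof -
  have "(\<Sum>k\<le>n. of_nat (n choose k) * qq ^ k * beta k)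
        = (\<Sum>k<n. of_nat (n choose k) * qq ^ k * beta k) + qq ^ n * beta n"
    by (simp add: lessThan_Suc_atMost[symmetric])
  then show ?thesis using beta_eq[of n] by (simp add: algebra_simps)
qed

abbreviation "rr \<equiv> [:1, qq:]"

lemma Psi_rr_pow: "Psi (rr ^ n) = (\<Sum>k\<le>n. of_nat (n choose k) * qq ^ k * beta k)"
proof -
  have "degree (rr ^ n) \<le> n"
    using degree_power_le[of rr n] by simp
  then have "Psi (rr ^ n) = (\<Sum>k\<le>n. coeff (rr ^ n) k * beta k)" by (rule Psi_le)
  also have "\<dots> = (\<Sum>k\<le>n. of_nat (n choose k) * qq ^ k * beta k)"
    by (rule sum.cong) (auto simp: coeff_linear_poly_power)
  finally show ?thesis .
qed

lemma pcompose_monom: "pcompose (monom c i) r = Polynomial.smult c (r ^ i)"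
  by (induct i) (auto simp: monom_Suc pcompose_pCons monom_0)

definition Rf :: "qf poly \<Rightarrow> qf" where "Rf p = (qq - 1) * coeff p 0 + coeff p 1"

lemma Rf_sum: "Rf (\<Sum>i\<in>A. f i) = (\<Sum>i\<in>A. Rf (f i))"
  by (simp add: Rf_def coeff_sum sum.distrib sum_distrib_left)

lemma funeq: "qq * Psi (pcompose p rr) - Psi p = Rf p"
proof -
  have mon: "qq * Psi (pcompose (monom c i) rr) - Psi (monom c i) = Rf (monom c i)" for c i
  proof -
    have "qq * Psi (pcompose (monom c i) rr) - Psi (monom c i)
       = c * (qq * (\<Sum>k\<le>i. of_nat (i choose k) * qq ^ k * beta k) - beta i)"
      by (simp add: pcompose_monom Psi_smult Psi_rr_pow Psi_monom algebra_simps)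
    also have "\<dots> = c * carlitz_rhs i" by (simp add: beta_rel)
    also have "\<dots> = Rf (monom c i)"
      by (auto simp: Rf_def carlitz_rhs_def coeff_monom)
    finally show ?thesis .
  qed
  have e1: "pcompose p rr = (\<Sum>i\<le>degree p. pcompose (monom (coeff p i) i) rr)"
    using pcompose_sum[of "\<lambda>i. monom (coeff p i) i" "{..degree p}" rr]
    by (simp add: poly_as_sum_of_monoms)
  have e2: "Psi p = (\<Sum>i\<le>degree p. Psi (monom (coeff p i) i))"
    using Psi_sum[of "\<lambda>i. monom (coeff p i) i" "{..degree p}"]
    by (simp add: poly_as_sum_of_monoms)
  have "qq * Psi (pcompose p rr) - Psi p
     = (\<Sum>i\<le>degree p. qq * Psi (pcompose (monom (coeff p i) i) rr) - Psi (monom (coeff p i) i))"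
    unfolding e1 e2 Psi_sum by (simp add: sum_distrib_left sum_subtractf)
  also have "\<dots> = (\<Sum>i\<le>degree p. Rf (monom (coeff p i) i))" by (simp add: mon)
  also have "\<dots> = Rf p"
  proof -
    have "(\<Sum>i\<le>degree p. Rf (monom (coeff p i) i)) = Rf (\<Sum>i\<le>degree p. monom (coeff p i) i)"
      by (rule Rf_sum[symmetric])
    then show ?thesis by (simp add: poly_as_sum_of_monoms)
  qed
  finally show ?thesis .
qed


abbreviation "xx \<equiv> [:0, 1::qf:]"

lemma qpow_m1: "qq ^ m - 1 = (qq - 1) * qint m"
  by (simp add: qint_def)

lemma qint_Suc0 [simp]: "qint (Suc 0) = 1" by (simp add: qint_def)
declare pcompose_1[simp]

lemma qint_Suc': "qint (Suc m) = qint m + qq ^ m"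
  using qint_add[of m 1] by simp

lemma Asc_0 [simp]: "Asc 0 = 1" by (simp add: Asc_def)
lemma Asc_Suc: "Asc (Suc m) = Asc m * [:qint (Suc m), qq ^ Suc m:]"
  by (simp add: Asc_def prod.nat_ivl_Suc')
lemma Desc_0 [simp]: "Desc 0 = 1" by (simp add: Desc_def)
lemma Desc_Suc: "Desc (Suc m) = Desc m * [:qint (Suc m), -1:]"
  by (simp add: Desc_def prod.nat_ivl_Suc')
lemma xDesc_0 [simp]: "xDesc 0 = -1" by (simp add: xDesc_def)
lemma xDesc_Suc: "xDesc (Suc c) = xx * Desc c" by (simp add: xDesc_def)

lemma xDesc_mult: "xDesc c * [:qint c, -1:] = xDesc (Suc c)"
proof (cases c)
  case 0 then show ?thesis by (simp add: xDesc_def)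
next
  case (Suc c') then show ?thesis by (simp add: xDesc_def Desc_Suc mult.assoc)
qed

lemma pc_lin: "pcompose [:u, v:] rr = [:u + v, v * qq:]"
  by (simp add: pcompose_pCons)

lemma pc_Asc: "pcompose (Asc m) rr * rr = Asc (Suc m)"
proof (induct m)
  case 0 then show ?case by (simp add: Asc_Suc)
next
  case (Suc m)
  have "pcompose (Asc (Suc m)) rr * rr = (pcompose (Asc m) rr * rr) * pcompose [:qint (Suc m), qq ^ Suc m:] rr"
    by (simp only: Asc_Suc pcompose_mult mult_ac)
  also have "\<dots> = Asc (Suc m) * [:qint (Suc (Suc m)), qq ^ Suc (Suc m):]"
    unfolding Suc pc_lin by (simp add: qint_Suc'[of "Suc m"] mult.commute)
  also have "\<dots> = Asc (Suc (Suc m))" by (simp add: Asc_Suc)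
  finally show ?case .
qed

lemma pc_Desc: "pcompose (Desc c) rr = Polynomial.smult (- (qq ^ c)) (xDesc c)"
proof (induct c)
  case 0 then show ?case by simp
next
  case (Suc c)
  have l: "pcompose [:qint (Suc c), -1:] rr = Polynomial.smult qq [:qint c, -1:]"
    unfolding pc_lin by (simp add: qint_Suc)
  have "pcompose (Desc (Suc c)) rr = Polynomial.smult (- (qq ^ c)) (xDesc c) * Polynomial.smult qq [:qint c, -1:]"
    by (simp only: Desc_Suc pcompose_mult Suc l)
  also have "\<dots> = Polynomial.smult (- (qq ^ Suc c)) (xDesc c * [:qint c, -1:])"
  proof -
    have k: "- (qq ^ c) * qq = - (qq ^ Suc c)" "qq * - (qq ^ c) = - (qq ^ Suc c)" by (simp_all add: mult.commute)
    show ?thesis by (simp only: mult_smult_left mult_smult_right smult_smult k)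
  qed
  finally show ?case by (simp only: xDesc_mult)
qed

lemma pc_xDesc: "pcompose (xDesc (Suc c)) rr = Polynomial.smult (- (qq ^ c)) (rr * xDesc c)"
  by (simp add: xDesc_Suc pcompose_mult pc_Desc pcompose_pCons)

lemma poly_Asc0: "poly (Asc m) 0 = qfact m"
  by (simp add: Asc_def qfact_def poly_prod)
lemma poly_Desc0: "poly (Desc m) 0 = qfact m"
  by (simp add: Desc_def qfact_def poly_prod)

lemma Rf_x: "Rf (xx * g) = poly g 0"
  by (simp add: Rf_def poly_0_coeff_0)
lemma Rf_xx: "Rf (xx * (xx * g)) = 0"
  by (simp add: Rf_def)

lemma x_Asc: "xx * Asc m = Polynomial.smult (inverse (qq ^ Suc m)) (Asc (Suc m) - Polynomial.smult (qint (Suc m)) (Asc m))"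
proof -
  have "Asc (Suc m) = Polynomial.smult (qint (Suc m)) (Asc m) + Polynomial.smult (qq ^ Suc m) (xx * Asc m)"
    by (simp add: Asc_Suc algebra_simps)
  then have h: "Polynomial.smult (qq ^ Suc m) (xx * Asc m) = Asc (Suc m) - Polynomial.smult (qint (Suc m)) (Asc m)"
    by (simp add: algebra_simps)
  have i: "inverse (qq ^ Suc m) * qq ^ Suc m = 1" by (simp del: power_Suc)
  have "xx * Asc m = Polynomial.smult (inverse (qq ^ Suc m)) (Polynomial.smult (qq ^ Suc m) (xx * Asc m))"
    by (simp only: smult_smult i smult_1_left)
  then show ?thesis by (simp only: h)
qed

lemma Psi_x_Asc: "Psi (xx * Asc m * g) = (Psi (Asc (Suc m) * g) - qint (Suc m) * Psi (Asc m * g)) / qq ^ Suc m"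
proof -
  have "xx * Asc m * g = Polynomial.smult (inverse (qq ^ Suc m)) ((Asc (Suc m) - Polynomial.smult (qint (Suc m)) (Asc m)) * g)"
    by (simp only: x_Asc mult_smult_left)
  also have "\<dots> = Polynomial.smult (inverse (qq ^ Suc m)) (Asc (Suc m) * g - Polynomial.smult (qint (Suc m)) (Asc m * g))"
    by (simp only: left_diff_distrib mult_smult_left)
  finally have "xx * Asc m * g = \<dots>" .
  then show ?thesis by (simp add: Psi_smult Psi_diff divide_inverse mult.commute)
qed

lemma beta0: "beta 0 = 1"
proof -
  have "beta 0 = (carlitz_rhs 0 - qq * (\<Sum>k<0. of_nat (0 choose k) * qq ^ k * beta k)) / (qq ^ (0 + 1) - 1)"
    by (rule beta.simps)
  then show ?thesis by (simp add: carlitz_rhs_def)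
qed

lemma Psi_one: "Psi 1 = 1"
  using Psi_monom[of 1 0] by (simp add: beta0 monom_0 one_pCons)

lemma A_closed: "Psi (Asc n) = qfact n / qint (Suc n)"
proof (induct n)
  case 0 then show ?case by (simp add: Psi_one)
next
  case (Suc n)
  have fe: "qq * Psi (pcompose (xx * Asc n) rr) - Psi (xx * Asc n) = Rf (xx * Asc n)" by (rule funeq)
  have pc: "pcompose (xx * Asc n) rr = Asc (Suc n)"
    using pc_Asc[of n] by (simp add: pcompose_mult pcompose_pCons mult.commute)
  have px: "Psi (xx * Asc n) = (Psi (Asc (Suc n)) - qint (Suc n) * Psi (Asc n)) / qq ^ Suc n"
    using Psi_x_Asc[of n 1] by simp
  from fe have "qq * Psi (Asc (Suc n)) - (Psi (Asc (Suc n)) - qint (Suc n) * Psi (Asc n)) / qq ^ Suc n = qfact n"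
    unfolding pc px Rf_x poly_Asc0 .
  then have e: "Psi (Asc (Suc n)) * (qq ^ Suc (Suc n) - 1) = qq ^ Suc n * qfact n - qint (Suc n) * Psi (Asc n)"
    by (simp add: field_simps)
  have nz: "qint (Suc (Suc n)) \<noteq> 0" "qint (Suc n) \<noteq> 0" by (simp_all add: qint_nz)
  have "qint (Suc n) * (qfact n / qint (Suc n)) = qfact n" using nz by simp
  then have "Psi (Asc (Suc n)) * (qq ^ Suc (Suc n) - 1) = qq ^ Suc n * qfact n - qfact n"
    using e Suc by simp
  then have "Psi (Asc (Suc n)) * ((qq - 1) * qint (Suc (Suc n))) = qfact n * ((qq - 1) * qint (Suc n))"
    unfolding qpow_m1[symmetric] by (simp add: algebra_simps)
  then have "(Psi (Asc (Suc n)) * qint (Suc (Suc n))) * (qq - 1) = (qfact n * qint (Suc n)) * (qq - 1)"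
    by (simp add: mult_ac)
  then have "Psi (Asc (Suc n)) * qint (Suc (Suc n)) = qfact n * qint (Suc n)" by simp
  then show ?case using nz by (simp add: qfact_Suc field_simps)
qed


lemma pc_xx: "pcompose xx rr = rr" by (simp add: pcompose_pCons)

lemma K_closed: "Psi (Asc a * xDesc c) = - (qfact c * qfact a / qint (a + c + 1))"
proof (induct c arbitrary: a)
  case 0 then show ?case by (simp add: Psi_uminus A_closed)
next
  case (Suc c)
  let ?p = "xx * (Asc a * Desc c)"
  have fe: "qq * Psi (pcompose ?p rr) - Psi ?p = Rf ?p" by (rule funeq)
  have pc: "pcompose ?p rr = Polynomial.smult (- (qq ^ c)) (Asc (Suc a) * xDesc c)"
  proof -
    have "pcompose ?p rr = Polynomial.smult (- (qq ^ c)) ((pcompose (Asc a) rr * rr) * xDesc c)"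
      by (simp only: pcompose_mult pc_xx pc_Desc mult_smult_right) (simp only: mult_ac)
    then show ?thesis by (simp only: pc_Asc)
  qed
  have pe: "?p = Asc a * xDesc (Suc c)" by (simp only: xDesc_Suc mult_ac)
  have "qq * (- (qq ^ c) * Psi (Asc (Suc a) * xDesc c)) - Psi (Asc a * xDesc (Suc c)) = qfact a * qfact c"
    using fe unfolding pc Psi_smult Rf_x pe[symmetric] by (simp add: poly_Asc0 poly_Desc0)
  then have rel: "Psi (Asc a * xDesc (Suc c)) = - (qq ^ Suc c) * Psi (Asc (Suc a) * xDesc c) - qfact a * qfact c"
    by (simp add: algebra_simps)
  have h: "qint (Suc (Suc (a + c))) = qint (Suc c) + qq * qq ^ c * qint (Suc a)"
    using qint_add[of "Suc c" "Suc a"] by (simp add: add_ac eval_nat_numeral)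
  have nz: "qint (a + Suc c + 1) \<noteq> 0" by (simp add: qint_nz)
  have IH: "Psi (Asc (Suc a) * xDesc c) = - (qfact c * qfact (Suc a) / qint (a + Suc c + 1))"
    using Suc[of "Suc a"] by simp
  show ?case unfolding rel IH using nz
    by (simp add: qfact_Suc field_simps h)
qed

lemma G_alg:
  fixes X A1 A2 B1 N P :: qf
  assumes "N = A2 + P * B1" "N \<noteq> 0" "P \<noteq> 0"
  shows "- (- (X * A1 * A2 / N) - A1 * - X) / P = - (X * A1 * B1 / N)"
proof -
  have "- (X * A1 * A2 / N) - A1 * - X = X * A1 * B1 * P / N"
    using assms(2) unfolding assms(1) by (simp add: field_simps)
  then show ?thesis using assms(3) by simp
qed

lemma G_closed: "Psi (Asc a * Asc b * xDesc c) =
   - (qfact (a + c) * qfact (b + c) * qfact a * qfact b / qfact (a + b + c + 1))"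
proof (induct b arbitrary: a c)
  case 0 then show ?case by (simp add: K_closed qfact_Suc qfact_nz field_simps)
next
  case (Suc b)
  show ?case
  proof (cases a)
    case 0
    then show ?thesis
      using K_closed[of "Suc b" c] by (simp add: qfact_Suc qfact_nz qint_nz field_simps add_ac)
  next
    case (Suc a')
    let ?p = "xx * (xx * (Asc a' * Asc b * Desc c))"
    have fe: "qq * Psi (pcompose ?p rr) - Psi ?p = Rf ?p" by (rule funeq)
    have pc: "pcompose ?p rr = Polynomial.smult (- (qq ^ c)) (Asc (Suc a') * Asc (Suc b) * xDesc c)"
    proof -
      have "pcompose ?p rr = Polynomial.smult (- (qq ^ c)) ((pcompose (Asc a') rr * rr) * (pcompose (Asc b) rr * rr) * xDesc c)"
        by (simp only: pcompose_mult pc_xx pc_Desc mult_smult_right) (simp only: mult_ac)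
      then show ?thesis by (simp only: pc_Asc)
    qed
    have pe: "?p = xx * Asc a' * (Asc b * xDesc (Suc c))" by (simp only: xDesc_Suc mult_ac)
    have "qq * (- (qq ^ c) * Psi (Asc (Suc a') * Asc (Suc b) * xDesc c))
       - (Psi (Asc (Suc a') * (Asc b * xDesc (Suc c))) - qint (Suc a') * Psi (Asc a' * (Asc b * xDesc (Suc c)))) / qq ^ Suc a' = 0"
    proof -
      have e: "Psi ?p = (Psi (Asc (Suc a') * (Asc b * xDesc (Suc c))) - qint (Suc a') * Psi (Asc a' * (Asc b * xDesc (Suc c)))) / qq ^ Suc a'"
        by (simp only: pe Psi_x_Asc)
      show ?thesis using fe unfolding pc Psi_smult Rf_xx e by simp
    qed
    then have rel: "Psi (Asc (Suc a') * Asc (Suc b) * xDesc c) =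
       - (Psi (Asc (Suc a') * Asc b * xDesc (Suc c)) - qint (Suc a') * Psi (Asc a' * Asc b * xDesc (Suc c))) / (qq ^ Suc a' * qq ^ Suc c)"
      by (simp add: field_simps mult_ac)
    define X where "X = qfact (a' + c + 1) * qfact (b + c + 1) * qfact a' * qfact b / qfact (a' + b + c + 2)"
    define N where "N = qint (a' + b + c + 3)"
    define A1 where "A1 = qint (Suc a')"
    define A2 where "A2 = qint (a' + c + 2)"
    define B1 where "B1 = qint (Suc b)"
    have h: "N = A2 + qq ^ Suc a' * qq ^ Suc c * B1"
    proof -
      have i: "a' + b + c + 3 = (a' + c + 2) + Suc b" by simp
      have p: "qq ^ (a' + c + 2) = qq ^ Suc a' * qq ^ Suc c"
        by (simp add: power_add[symmetric])
      show ?thesis unfolding N_def A2_def B1_def i qint_add p ..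
    qed
    have IH1: "Psi (Asc (Suc a') * Asc b * xDesc (Suc c)) =
       - (qfact (a' + c + 2) * qfact (b + c + 1) * qfact (Suc a') * qfact b / qfact (a' + b + c + 3))"
      using Suc.hyps[of "Suc a'" "Suc c"] by (simp add: add_ac eval_nat_numeral)
    have IH2: "Psi (Asc a' * Asc b * xDesc (Suc c)) =
       - (qfact (a' + c + 1) * qfact (b + c + 1) * qfact a' * qfact b / qfact (a' + b + c + 2))"
      using Suc.hyps[of a' "Suc c"] by (simp add: add_ac eval_nat_numeral)
    have f1: "qfact (a' + b + c + 3) = qfact (a' + b + c + 2) * N"
      using qfact_Suc[of "a' + b + c + 2"] unfolding N_def by (simp add: add_ac eval_nat_numeral)
    have f2: "qfact (a' + c + 2) = qfact (a' + c + 1) * A2"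
      using qfact_Suc[of "a' + c + 1"] unfolding A2_def by (simp add: add_ac eval_nat_numeral)
    have f3: "qfact (Suc a') = qfact a' * A1" "qfact (Suc b) = qfact b * B1"
      unfolding A1_def B1_def by (simp_all add: qfact_Suc)
    have nz: "qfact (a' + b + c + 2) \<noteq> 0" "N \<noteq> 0" "qfact (a' + b + c + 3) \<noteq> 0"
      unfolding N_def by (simp_all add: qfact_nz qint_nz)
    have I1: "Psi (Asc (Suc a') * Asc b * xDesc (Suc c)) = - (X * A1 * A2 / N)"
      unfolding IH1 f1 f2 f3 X_def using nz by (simp add: field_simps)
    have I2: "Psi (Asc a' * Asc b * xDesc (Suc c)) = - X"
      unfolding IH2 X_def by simp
    have T: "- (qfact (a' + c + 1) * qfact (b + c + 1) * qfact (Suc a') * qfact (Suc b) / qfact (a' + b + c + 3))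
          = - (X * A1 * B1 / N)"
      unfolding f1 f3 X_def using nz by (simp add: field_simps)
    have goal: "Psi (Asc (Suc a') * Asc (Suc b) * xDesc c) = - (X * A1 * B1 / N)"
      unfolding rel I1 I2 A1_def[symmetric] by (rule G_alg[OF h nz(2)]) simp
    have "Psi (Asc (Suc a') * Asc (Suc b) * xDesc c) =
       - (qfact (Suc a' + c) * qfact (Suc b + c) * qfact (Suc a') * qfact (Suc b) / qfact (Suc a' + Suc b + c + 1))"
      unfolding goal T[symmetric] by (simp add: add_ac eval_nat_numeral)
    then show ?thesis using Suc by simp
  qed
qed


lemma Cc_closed: "Psi (Asc a * Asc b * xDesc c * xDesc d) =
   qq ^ (c * d) * qfact (a + c) * qfact (b + c) * qfact (a + d) * qfact (b + d) / qfact (a + b + c + d + 1)"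
proof (induct d arbitrary: a b c)
  case 0 then show ?case by (simp add: G_closed Psi_uminus)
next
  case (Suc d)
  note IH = Suc.hyps
  show ?case
  proof (cases c)
    case 0
    have "Psi (Asc a * Asc b * xDesc c * xDesc (Suc d)) = Psi (Asc a * Asc b * xDesc (Suc d) * xDesc 0)"
      using 0 by (simp add: mult_ac)
    also have "\<dots> = qq ^ (Suc d * 0) * qfact (a + Suc d) * qfact (b + Suc d) * qfact (a + 0) * qfact (b + 0) / qfact (a + b + Suc d + 0 + 1)"
      by (simp add: G_closed Psi_uminus)
    finally show ?thesis using 0 by (simp add: mult_ac add_ac)
  next
    case (Suc c')
    let ?p = "xx * (xx * (Asc a * Asc b * Desc c' * Desc d))"
    have fe: "qq * Psi (pcompose ?p rr) - Psi ?p = Rf ?p" by (rule funeq)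
    have pc: "pcompose ?p rr = Polynomial.smult (qq ^ c' * qq ^ d) (Asc (Suc a) * Asc (Suc b) * xDesc c' * xDesc d)"
    proof -
      have "pcompose ?p rr = Polynomial.smult (qq ^ c' * qq ^ d) ((pcompose (Asc a) rr * rr) * (pcompose (Asc b) rr * rr) * xDesc c' * xDesc d)"
        by (simp only: pcompose_mult pc_xx pc_Desc mult_smult_right mult_smult_left smult_smult mult_minus_left minus_mult_right minus_minus) (simp only: mult_ac)
      then show ?thesis by (simp only: pc_Asc)
    qed
    have pe: "?p = Asc a * Asc b * xDesc c * xDesc (Suc d)" unfolding Suc by (simp only: xDesc_Suc mult_ac)
    have rel: "Psi (Asc a * Asc b * xDesc c * xDesc (Suc d)) = qq ^ (c + d) * Psi (Asc (Suc a) * Asc (Suc b) * xDesc c' * xDesc d)"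
    proof -
      have fe2: "qq * ((qq ^ c' * qq ^ d) * Psi (Asc (Suc a) * Asc (Suc b) * xDesc c' * xDesc d)) - Psi ?p = 0"
        using fe unfolding pc Psi_smult Rf_xx .
      have e: "Psi ?p = Psi (Asc a * Asc b * xDesc c * xDesc (Suc d))" by (simp only: pe)
      show ?thesis using fe2 unfolding e Suc by (simp add: power_add algebra_simps)
    qed
    have cc: "c = Suc c'" by fact
    show ?thesis using rel IH[of "Suc a" "Suc b" c'] unfolding cc
      by (simp add: power_add algebra_simps)
  qed
qed

lemma C_closed:
  assumes "a \<ge> 1" "b \<ge> 1"
  shows "Cabcd a b c d = qq ^ (c * d) * qfact (a + c - 1) * qfact (b + c - 1) * qfact (a + d - 1) * qfact (b + d - 1) / qfact (a + b + c + d - 1)"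
proof -
  obtain a' b' where "a = Suc a'" "b = Suc b'" using assms by (metis Suc_le_D One_nat_def)
  then show ?thesis unfolding Cabcd_def x2W_def using Cc_closed[of a' b' c d] by (simp add: add_ac)
qed


fun T :: "nat \<Rightarrow> (nat \<Rightarrow> qf) \<Rightarrow> qf" where
  "T 0 u = u 0"
| "T (Suc k) u = T k u - qq ^ k * T k (\<lambda>m. u (Suc m))"

lemma T_cong: "(\<And>m. m \<le> k \<Longrightarrow> u m = v m) \<Longrightarrow> T k u = T k v"
proof (induct k arbitrary: u v)
  case 0 then show ?case by simp
next
  case (Suc k)
  have "T k u = T k v" using Suc.prems by (intro Suc.hyps) simp
  moreover have "T k (\<lambda>m. u (Suc m)) = T k (\<lambda>m. v (Suc m))" using Suc.prems by (intro Suc.hyps) simp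
  ultimately show ?case by simp
qed

lemma T_add: "T k (\<lambda>m. u m + v m) = T k u + T k v"
  by (induct k arbitrary: u v) (simp_all add: algebra_simps)

lemma T_cmult: "T k (\<lambda>m. c * u m) = c * T k u"
  by (induct k arbitrary: u) (simp_all add: algebra_simps)

lemma T_zero: "T k (\<lambda>m. 0) = 0"
  using T_cmult[of k 0 "\<lambda>m. 0"] by simp

lemma T_sum: "finite A \<Longrightarrow> T k (\<lambda>m. \<Sum>i\<in>A. f i m) = (\<Sum>i\<in>A. T k (f i))"
  by (induct A rule: finite_induct) (simp_all add: T_zero T_add)

definition tc :: "nat \<Rightarrow> nat \<Rightarrow> qf" where "tc k m = T k (\<lambda>i. if i = m then 1 else 0)"

lemma T_repr: "T k u = (\<Sum>m\<le>k. tc k m * u m)"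
proof -
  have "T k u = T k (\<lambda>i. \<Sum>m\<le>k. u m * (if i = m then 1 else 0))"
    by (rule T_cong) (simp add: if_distrib[where f="\<lambda>x. _ * x"] cong: if_cong)
  also have "\<dots> = (\<Sum>m\<le>k. T k (\<lambda>i. u m * (if i = m then 1 else 0)))"
    by (rule T_sum) simp
  also have "\<dots> = (\<Sum>m\<le>k. tc k m * u m)"
    by (simp add: T_cmult tc_def mult.commute)
  finally show ?thesis .
qed

lemma tc_high: "k < m \<Longrightarrow> tc k m = 0"
  unfolding tc_def using T_zero by (metis (mono_tags, lifting) T_cong leD le_less_trans)

lemma tc_top: "tc k k = (\<Prod>i<k. - (qq ^ i))"
proof (induct k)
  case 0 then show ?case by (simp add: tc_def)
next
  case (Suc k)
  have "tc (Suc k) (Suc k) = tc k (Suc k) - qq ^ k * tc k k"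
    by (simp add: tc_def)
  then show ?case using Suc by (simp add: tc_high)
qed

definition ww :: qf where "ww = inverse qq"

lemma ww_qq: "qq ^ k * ww ^ k = 1"
  by (simp add: ww_def power_mult_distrib[symmetric])

lemma T_geom: "e < k \<Longrightarrow> T k (\<lambda>m. ww ^ (e * m)) = 0"
proof (induct k)
  case 0 then show ?case by simp
next
  case (Suc k)
  have "T k (\<lambda>m. ww ^ (e * Suc m)) = ww ^ e * T k (\<lambda>m. ww ^ (e * m))"
    using T_cmult[of k "ww ^ e" "\<lambda>m. ww ^ (e * m)"] by (simp add: power_add)
  then have "T (Suc k) (\<lambda>m. ww ^ (e * m)) = (1 - qq ^ k * ww ^ e) * T k (\<lambda>m. ww ^ (e * m))"
    by (simp add: algebra_simps)
  moreover have "e = k \<or> e < k" using Suc.prems by auto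
  ultimately show ?case using Suc.hyps ww_qq[of k] by auto
qed

lemma T_poly: "degree p < k \<Longrightarrow> T k (\<lambda>m. poly p (ww ^ m)) = 0"
proof -
  assume d: "degree p < k"
  have "T k (\<lambda>m. poly p (ww ^ m)) = T k (\<lambda>m. \<Sum>i\<le>degree p. coeff p i * ww ^ (i * m))"
    by (simp add: poly_altdef power_mult[symmetric] mult.commute)
  also have "\<dots> = (\<Sum>i\<le>degree p. T k (\<lambda>m. coeff p i * ww ^ (i * m)))"
    by (rule T_sum) simp
  also have "\<dots> = 0" using d by (simp add: T_cmult T_geom)
  finally show ?thesis .
qed

lemma T_diag: "T k (\<lambda>m. qq ^ m / qint (Suc b0 + m)) = qfact k * qfact b0 / qfact (Suc b0 + k)"
proof (induct k arbitrary: b0)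
  case 0 then show ?case by (simp add: qfact_Suc qfact_nz qint_nz)
next
  case (Suc k)
  have sh: "T k (\<lambda>m. qq ^ Suc m / qint (Suc b0 + Suc m)) = qq * T k (\<lambda>m. qq ^ m / qint (Suc (Suc b0) + m))"
    using T_cmult[of k qq "\<lambda>m. qq ^ m / qint (Suc (Suc b0) + m)"] by simp
  have rel: "T (Suc k) (\<lambda>m. qq ^ m / qint (Suc b0 + m))
     = qfact k * qfact b0 / qfact (Suc b0 + k) - qq ^ Suc k * (qfact k * qfact (Suc b0) / qfact (Suc (Suc b0) + k))"
    by (simp only: T.simps sh Suc.hyps) (simp add: algebra_simps)
  define N where "N = qint (Suc (Suc (b0 + k)))"
  have h: "N = qint (Suc k) + qq ^ Suc k * qint (Suc b0)"
    unfolding N_def using qint_add[of "Suc k" "Suc b0"] by (simp add: add_ac)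
  have f1: "qfact (Suc (Suc b0) + k) = qfact (Suc b0 + k) * N"
    unfolding N_def by (simp add: qfact_Suc)
  have nz: "N \<noteq> 0" "qfact (Suc b0 + k) \<noteq> 0" unfolding N_def by (simp_all add: qint_nz qfact_nz)
  have "T (Suc k) (\<lambda>m. qq ^ m / qint (Suc b0 + m)) = qfact k * qfact b0 * (N - qq ^ Suc k * qint (Suc b0)) / (qfact (Suc b0 + k) * N)"
    unfolding rel f1 using nz by (simp add: qfact_Suc field_simps)
  also have "\<dots> = qfact k * qfact b0 * qint (Suc k) / (qfact (Suc b0 + k) * N)"
    by (simp add: h)
  also have "\<dots> = qfact (Suc k) * qfact b0 / qfact (Suc b0 + Suc k)"
  proof -
    have f2: "qfact (Suc b0 + Suc k) = qfact (Suc b0 + k) * N" using f1 by simp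
    show ?thesis unfolding f2 qfact_Suc[of k] by (simp add: mult_ac)
  qed
  finally show ?case .
qed


lemma poly_monoms_lt: fixes p :: "qf poly" shows "degree p < n \<Longrightarrow> p = (\<Sum>i<n. monom (coeff p i) i)"
proof -
  assume "degree p < n"
  then have "degree p \<le> n - 1" by simp
  then have "(\<Sum>i\<le>n - 1. monom (coeff p i) i) = p" by (rule poly_as_sum_of_monoms')
  moreover have "{..n - 1} = {..<n}" using \<open>degree p < n\<close> by auto
  ultimately show ?thesis by simp
qed

lemma Psi_expand_left: fixes p X :: "qf poly" shows "degree p < n \<Longrightarrow>
   (\<Sum>i<n. coeff p i * Psi (monom 1 (i + l) * X)) = Psi (p * monom 1 l * X)"
proof -
  assume d: "degree p < n"
  have "Psi (p * monom 1 l * X) = Psi ((\<Sum>i<n. monom (coeff p i) i) * monom 1 l * X)"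
    using poly_monoms_lt[OF d] by (rule arg_cong[where f="\<lambda>t. Psi (t * monom 1 l * X)"])
  also have "\<dots> = Psi (\<Sum>i<n. Polynomial.smult (coeff p i) (monom 1 (i + l) * X))"
  proof -
    have "(\<Sum>i<n. monom (coeff p i) i) * monom 1 l * X = (\<Sum>i<n. monom (coeff p i) (i + l) * X)"
      by (simp add: sum_distrib_right mult_monom)
    also have "\<dots> = (\<Sum>i<n. Polynomial.smult (coeff p i) (monom 1 (i + l) * X))"
      by (rule sum.cong) (simp_all only: mult_smult_left[symmetric] smult_monom mult_1_right)
    finally show ?thesis by simp
  qed
  also have "\<dots> = (\<Sum>i<n. coeff p i * Psi (monom 1 (i + l) * X))"
    by (simp add: Psi_sum Psi_smult)
  finally show ?thesis by simp
qed

lemma aux_smult: fixes p X :: "qf poly" shows "p * monom c l * X = Polynomial.smult c (p * monom 1 l * X)"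
proof -
  have m: "monom c l = Polynomial.smult c (monom 1 l)" by (simp add: smult_monom)
  have "p * monom c l * X = p * Polynomial.smult c (monom 1 l) * X" by (simp only: m)
  also have "\<dots> = Polynomial.smult c (p * monom 1 l * X)" by simp
  finally show ?thesis .
qed

lemma Psi_expand_right: fixes p r X :: "qf poly" shows "degree r < n \<Longrightarrow>
   (\<Sum>l<n. Psi (p * monom 1 l * X) * coeff r l) = Psi (p * r * X)"
proof -
  assume d: "degree r < n"
  have "Psi (p * r * X) = Psi (p * (\<Sum>l<n. monom (coeff r l) l) * X)"
    using poly_monoms_lt[OF d] by (rule arg_cong[where f="\<lambda>t. Psi (p * t * X)"])
  also have "\<dots> = Psi (\<Sum>l<n. Polynomial.smult (coeff r l) (p * monom 1 l * X))"
  proof -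
    have "p * (\<Sum>l<n. monom (coeff r l) l) * X = (\<Sum>l<n. p * monom (coeff r l) l * X)"
      by (simp only: sum_distrib_left sum_distrib_right)
    also have "\<dots> = (\<Sum>l<n. Polynomial.smult (coeff r l) (p * monom 1 l * X))"
      by (rule sum.cong) (simp, rule aux_smult)
    finally show ?thesis by (rule arg_cong[where f=Psi])
  qed
  also have "\<dots> = (\<Sum>l<n. Psi (p * monom 1 l * X) * coeff r l)"
    by (simp add: Psi_sum Psi_smult mult.commute)
  finally show ?thesis by simp
qed

lemma hankel_det:
  fixes F P :: "nat \<Rightarrow> qf poly" and X :: "qf poly"
  assumes dF: "\<And>j. j < n \<Longrightarrow> degree (F j) \<le> j"
    and dP: "\<And>k. k < n \<Longrightarrow> degree (P k) \<le> k"
    and orth: "\<And>j k. j < k \<Longrightarrow> k < n \<Longrightarrow> Psi (F j * P k * X) = 0"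
  shows "(\<Prod>j<n. coeff (F j) j) * det (mat n n (\<lambda>(i, j). Psi (monom 1 (i + j) * X))) * (\<Prod>k<n. coeff (P k) k)
       = (\<Prod>k<n. Psi (F k * P k * X))"
proof -
  define M where "M = mat n n (\<lambda>(i, j). Psi (monom 1 (i + j) * X))"
  define Fm where "Fm = mat n n (\<lambda>(j, i). coeff (F j) i)"
  define Pm where "Pm = mat n n (\<lambda>(i, k). coeff (P k) i)"
  have cM: "M \<in> carrier_mat n n" and cF: "Fm \<in> carrier_mat n n" and cP: "Pm \<in> carrier_mat n n"
    unfolding M_def Fm_def Pm_def by auto
  have FM: "(Fm * M) $$ (j, l) = Psi (F j * monom 1 l * X)" if "j < n" "l < n" for j l
  proof -
    have "(Fm * M) $$ (j, l) = (\<Sum>i = 0..<n. coeff (F j) i * Psi (monom 1 (i + l) * X))"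
      using that cF cM by (simp add: Fm_def M_def scalar_prod_def)
    also have "\<dots> = Psi (F j * monom 1 l * X)"
      using Psi_expand_left[of "F j" n l X] dF[OF that(1)] that(1) by (simp add: atLeast0LessThan)
    finally show ?thesis .
  qed
  have G: "(Fm * M * Pm) $$ (j, k) = Psi (F j * P k * X)" if "j < n" "k < n" for j k
  proof -
    have "(Fm * M * Pm) $$ (j, k) = (\<Sum>l = 0..<n. (Fm * M) $$ (j, l) * coeff (P k) l)"
      using that cF cM cP by (simp add: Pm_def scalar_prod_def)
    also have "\<dots> = (\<Sum>l<n. Psi (F j * monom 1 l * X) * coeff (P k) l)"
      using that by (simp add: FM atLeast0LessThan)
    also have "\<dots> = Psi (F j * P k * X)"
      using Psi_expand_right[of "P k" n "F j" X] dP[OF that(2)] that(2) by simp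
    finally show ?thesis .
  qed
  have cG: "Fm * M * Pm \<in> carrier_mat n n" using cF cM cP by auto
  have dG: "det (Fm * M * Pm) = (\<Prod>k<n. Psi (F k * P k * X))"
  proof -
    have "det (Fm * M * Pm) = prod_list (diag_mat (Fm * M * Pm))"
      by (rule det_lower_triangular[OF _ cG]) (simp add: G orth)
    also have "\<dots> = (\<Prod>k<n. Psi (F k * P k * X))"
    proof -
      have "dim_row (Fm * M * Pm) = n" by (simp add: Fm_def)
      then show ?thesis unfolding prod_list_diag_prod by (simp add: G atLeast0LessThan)
    qed
    finally show ?thesis .
  qed
  have dFm: "det Fm = (\<Prod>j<n. coeff (F j) j)"
  proof -
    have "det Fm = prod_list (diag_mat Fm)"
    proof (rule det_lower_triangular[OF _ cF])
      fix i j assume "i < j" "j < n"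
      then show "Fm $$ (i, j) = 0" using dF[of i] by (simp add: Fm_def coeff_eq_0)
    qed
    then show ?thesis unfolding prod_list_diag_prod using cF by (simp add: Fm_def atLeast0LessThan)
  qed
  have dPm: "det Pm = (\<Prod>k<n. coeff (P k) k)"
  proof -
    have "upper_triangular Pm"
      unfolding upper_triangular_def
    proof (intro allI impI)
      fix i j assume "i < dim_row Pm" "j < i"
      then have i: "i < n" by (simp add: Pm_def)
      have "degree (P j) < i" using dP[of j] \<open>j < i\<close> i by simp
      then show "Pm $$ (i, j) = 0" using i \<open>j < i\<close> by (simp add: Pm_def coeff_eq_0)
    qed
    then have "det Pm = prod_list (diag_mat Pm)" by (rule det_upper_triangular[OF _ cP])
    then show ?thesis unfolding prod_list_diag_prod using cP by (simp add: Pm_def atLeast0LessThan)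
  qed
  have "det (Fm * M * Pm) = det Fm * det M * det Pm"
    using cF cM cP by (simp add: det_mult[of _ n])
  then show ?thesis using dG dFm dPm unfolding M_def by simp
qed


definition ext :: "nat \<Rightarrow> nat \<Rightarrow> qf poly" where
  "ext c m = (\<Prod>i\<in>{c..<c+m}. [:qint i, -1:])"

lemma ext_0 [simp]: "ext c 0 = 1" by (simp add: ext_def)
lemma ext_Suc: "ext c (Suc m) = ext c m * [:qint (c + m), -1:]"
  by (simp add: ext_def)

lemma xDesc_ext: "xDesc c * ext c m = xDesc (c + m)"
proof (induct m)
  case 0 then show ?case by simp
next
  case (Suc m)
  have "xDesc c * ext c (Suc m) = (xDesc c * ext c m) * [:qint (c + m), -1:]"
    by (simp only: ext_Suc mult.assoc)
  also have "\<dots> = xDesc (Suc (c + m))" by (simp only: Suc xDesc_mult)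
  finally show ?case by simp
qed

lemma ext_deg: "degree (ext c m) = m \<and> coeff (ext c m) m = (-1) ^ m"
proof (induct m)
  case 0 then show ?case by simp
next
  case (Suc m)
  have "coeff (ext c m) m \<noteq> 0" using Suc by simp
  then have nz: "ext c m \<noteq> 0" by auto
  have "degree (ext c m * [:qint (c + m), -1:]) = degree (ext c m) + degree [:qint (c + m), -1::qf:]"
    by (rule degree_mult_eq) (use nz in simp_all)
  then have "degree (ext c (Suc m)) = Suc m"
    using Suc by (simp only: ext_Suc) simp
  moreover have "coeff (ext c (Suc m)) (Suc m) = (-1) ^ Suc m"
    using Suc lead_coeff_mult[of "ext c m" "[:qint (c + m), -1:]"] \<open>degree (ext c (Suc m)) = Suc m\<close>
    by (simp only: ext_Suc) simp
  ultimately show ?case by simp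
qed


lemma qfact_ratio: "qfact (n + t) = qfact n * (\<Prod>i<t. qint (n + 1 + i))"
  by (induct t) (simp_all add: qfact_Suc mult.assoc)

context
  fixes a' b' c d :: nat
begin

definition Cv :: "nat \<Rightarrow> nat \<Rightarrow> qf" where
  "Cv c' d' = qq ^ (c' * d') * qfact (a' + c') * qfact (b' + c') * qfact (a' + d') * qfact (b' + d') / qfact (a' + b' + c' + d' + 1)"

definition X0 :: "qf poly" where "X0 = Asc a' * Asc b' * xDesc c * xDesc d"

lemma LF: "Psi (ext d j * ext c m * X0) = Cv (c + m) (d + j)"
proof -
  have "ext d j * ext c m * X0 = Asc a' * Asc b' * (xDesc c * ext c m) * (xDesc d * ext d j)"
    unfolding X0_def by (simp only: mult_ac)
  then show ?thesis unfolding xDesc_ext Cv_def by (simp add: Cc_closed)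
qed

definition rho :: "nat \<Rightarrow> nat \<Rightarrow> qf" where
  "rho k m = inverse (qq ^ (m * (d + k))) * qq ^ m * qfact (a' + b' + c + d + m + k) / (qfact (a' + c + m) * qfact (b' + c + m))"

definition Pk :: "nat \<Rightarrow> qf poly" where
  "Pk k = (\<Sum>m\<le>k. Polynomial.smult (tc k m * rho k m) (ext c m))"

lemma Pk_deg: "degree (Pk k) \<le> k"
  unfolding Pk_def
  by (rule degree_sum_le) (auto intro: order.trans[OF degree_smult_le] simp: ext_deg)

lemma Pk_lead: "coeff (Pk k) k = tc k k * rho k k * (-1) ^ k"
proof -
  have "coeff (Pk k) k = (\<Sum>m\<le>k. tc k m * rho k m * coeff (ext c m) k)"
    unfolding Pk_def by (simp add: coeff_sum)
  also have "\<dots> = (\<Sum>m\<in>{k}. tc k m * rho k m * coeff (ext c m) k)"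
  proof (rule sum.mono_neutral_right)
    show "\<forall>i\<in>{..k} - {k}. tc k i * rho k i * coeff (ext c i) k = 0"
      using ext_deg by (auto simp: coeff_eq_0)
  qed auto
  finally show ?thesis using ext_deg[of c k] by simp
qed

lemma Psi_FP: "Psi (ext d j * Pk k * X0) = T k (\<lambda>m. rho k m * Cv (c + m) (d + j))"
proof -
  have "ext d j * Pk k * X0 = (\<Sum>m\<le>k. Polynomial.smult (tc k m * rho k m) (ext d j * ext c m * X0))"
    unfolding Pk_def by (simp add: sum_distrib_left sum_distrib_right)
  then have "Psi (ext d j * Pk k * X0) = (\<Sum>m\<le>k. tc k m * (rho k m * Cv (c + m) (d + j)))"
    by (simp add: Psi_sum Psi_smult LF[unfolded mult.assoc] mult.assoc)
  then show ?thesis by (simp add: T_repr)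
qed

definition KK :: "nat \<Rightarrow> qf" where
  "KK j = qq ^ (c * (d + j)) * qfact (a' + d + j) * qfact (b' + d + j)"

lemma prodform: "rho k m * Cv (c + m) (d + j) =
   KK j * (inverse (qq ^ (m * (d + k))) * qq ^ m * qq ^ (m * (d + j)) *
     (qfact (a' + b' + c + d + m + k) / qfact (a' + b' + c + d + m + j + 1)))"
proof -
  have e: "qq ^ ((c + m) * (d + j)) = qq ^ (c * (d + j)) * qq ^ (m * (d + j))"
    by (simp add: power_add add_mult_distrib)
  have i: "a' + b' + (c + m) + (d + j) + 1 = a' + b' + c + d + m + j + 1" by simp
  have nz: "qfact (a' + (c + m)) \<noteq> 0" "qfact (b' + (c + m)) \<noteq> 0" "qfact (a' + b' + c + d + m + j + 1) \<noteq> 0"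
    by (simp_all add: qfact_nz)
  show ?thesis unfolding rho_def Cv_def KK_def e i using nz
    by (simp add: field_simps add_ac)
qed

lemma orth_val:
  assumes jk: "j < k"
  shows "Psi (ext d j * Pk k * X0) = 0"
proof -
  define t where "t = k - 1 - j"
  define S where "S = a' + b' + c + d"
  define Pt where "Pt = (\<Prod>i<t. Polynomial.smult (inverse (qq - 1)) [:qq ^ (S + j + 2 + i), -1:])"
  have degPt: "degree Pt < k"
  proof -
    have "degree Pt \<le> sum (degree \<circ> (\<lambda>i. Polynomial.smult (inverse (qq - 1)) [:qq ^ (S + j + 2 + i), -1::qf:])) {..<t}"
      unfolding Pt_def by (rule degree_prod_sum_le) simp
    also have "\<dots> \<le> sum (\<lambda>i. 1) {..<t}"
      by (rule sum_mono) (simp add: degree_smult_le order.trans[OF degree_smult_le])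
    finally show ?thesis using jk unfolding t_def by simp
  qed
  have inner: "rho k m * Cv (c + m) (d + j) = KK j * poly Pt (ww ^ m)" for m
  proof -
    have kk: "k = j + 1 + t" using jk unfolding t_def by simp
    have r: "qfact (a' + b' + c + d + m + k) = qfact (a' + b' + c + d + m + j + 1) * (\<Prod>i<t. qint (S + m + j + 2 + i))"
      using qfact_ratio[of "a' + b' + c + d + m + j + 1" t] unfolding kk S_def by (simp add: add_ac)
    have ex: "inverse (qq ^ (m * (d + k))) * qq ^ m * qq ^ (m * (d + j)) = inverse (qq ^ (m * t))"
    proof -
      have "m * (d + k) = m * t + (m + m * (d + j))" unfolding kk by (simp add: algebra_simps)
      then show ?thesis by (simp add: power_add field_simps)
    qed
    have pf: "inverse (qq ^ m) * qint (S + m + j + 2 + i) = poly (Polynomial.smult (inverse (qq - 1)) [:qq ^ (S + j + 2 + i), -1:]) (ww ^ m)" for i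
    proof -
      have e: "qq ^ (S + m + j + 2 + i) = qq ^ m * qq ^ (S + j + 2 + i)" by (simp add: power_add[symmetric] add_ac)
      have g: "inverse A * ((A * B - 1) / Q) = inverse Q * (B - inverse A)" if "A \<noteq> 0" "Q \<noteq> 0" for A B Q :: qf
        using that by (simp add: field_simps)
      have "poly (Polynomial.smult (inverse (qq - 1)) [:qq ^ (S + j + 2 + i), -1:]) (ww ^ m)
          = inverse (qq - 1) * (qq ^ (S + j + 2 + i) - inverse (qq ^ m))"
        by (simp add: ww_def power_inverse algebra_simps)
      also have "\<dots> = inverse (qq ^ m) * ((qq ^ m * qq ^ (S + j + 2 + i) - 1) / (qq - 1))"
        by (rule g[symmetric]) simp_all
      finally show ?thesis unfolding qint_def e by simp
    qed
    have "inverse (qq ^ (m * t)) * (\<Prod>i<t. qint (S + m + j + 2 + i)) = (\<Prod>i<t. inverse (qq ^ m) * qint (S + m + j + 2 + i))"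
    proof -
      have "inverse (qq ^ (m * t)) = (\<Prod>i<t. inverse (qq ^ m))"
        by (simp add: power_mult power_inverse)
      then show ?thesis by (simp add: prod.distrib)
    qed
    also have "\<dots> = poly Pt (ww ^ m)" unfolding Pt_def poly_prod by (rule prod.cong[OF refl], rule pf)
    finally have pr: "inverse (qq ^ (m * t)) * (\<Prod>i<t. qint (S + m + j + 2 + i)) = poly Pt (ww ^ m)" .
    have nz: "qfact (a' + b' + c + d + m + j + 1) \<noteq> 0" by (simp add: qfact_nz)
    show ?thesis unfolding prodform r using nz
      by (simp add: ex[symmetric] pr[symmetric] mult.assoc)
  qed
  have "Psi (ext d j * Pk k * X0) = T k (\<lambda>m. KK j * poly Pt (ww ^ m))"
    unfolding Psi_FP inner ..
  also have "\<dots> = 0" by (simp add: T_cmult T_poly degPt)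
  finally show ?thesis .
qed

lemma diag_val: "Psi (ext d k * Pk k * X0) = KK k * (qfact k * qfact (a' + b' + c + d + k) / qfact (Suc (a' + b' + c + d + k) + k))"
proof -
  have inner: "rho k m * Cv (c + m) (d + k) = KK k * (qq ^ m / qint (Suc (a' + b' + c + d + k) + m))" for m
  proof -
    have r: "qfact (a' + b' + c + d + m + k + 1) = qfact (a' + b' + c + d + m + k) * qint (Suc (a' + b' + c + d + k) + m)"
      using qfact_Suc[of "a' + b' + c + d + m + k"] by (simp add: add_ac)
    have ex: "inverse (qq ^ (m * (d + k))) * qq ^ m * qq ^ (m * (d + k)) = qq ^ m" by simp
    have nz: "qfact (a' + b' + c + d + m + k) \<noteq> 0" "qint (Suc (a' + b' + c + d + k) + m) \<noteq> 0"
      by (simp_all add: qfact_nz qint_nz)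
    show ?thesis unfolding prodform r ex using nz by (simp add: field_simps)
  qed
  show ?thesis unfolding Psi_FP inner T_cmult T_diag ..
qed

lemma qint_Suc_nz [simp]: "qint (Suc n) \<noteq> 0" by (simp add: qint_nz)

definition hh :: "nat \<Rightarrow> qf" where
  "hh k = KK k * (qfact k * qfact (a' + b' + c + d + k) / qfact (Suc (a' + b' + c + d + k) + k)) / (tc k k * rho k k)"

definition Rr :: "nat \<Rightarrow> qf" where
  "Rr i = (qint i * qint (Suc a' + c + i - 1) * qint (Suc b' + c + i - 1) * qint (Suc a' + d + i - 1)
        * qint (Suc b' + d + i - 1) * qint (Suc a' + Suc b' + c + d + i - 2))
       / (qint (Suc a' + Suc b' + c + d + 2 * i - 3) * qint (Suc a' + Suc b' + c + d + 2 * i - 2) ^ 2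
        * qint (Suc a' + Suc b' + c + d + 2 * i - 1))"

lemma tc_nz: "tc k k \<noteq> 0" by (simp add: tc_top)
lemma rho_nz: "rho k k \<noteq> 0" by (simp add: rho_def qfact_nz)

lemma KK_Suc: "KK (Suc k) = KK k * (qq ^ c * qint (Suc (a' + d + k)) * qint (Suc (b' + d + k)))"
  unfolding KK_def by (simp add: qfact_Suc power_add algebra_simps)

lemma tc_Suc: "tc (Suc k) (Suc k) = tc k k * (- (qq ^ k))"
  by (simp add: tc_top)

lemma rho_Suc: "rho (Suc k) (Suc k) = rho k k * (qq * qint (Suc (a' + b' + c + d + 2 * k)) * qint (Suc (Suc (a' + b' + c + d + 2 * k)))
   / (qq ^ (d + 2 * k + 1) * qint (Suc (a' + c + k)) * qint (Suc (b' + c + k))))"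
proof -
  have e: "qq ^ (Suc k * (d + Suc k)) = qq ^ (k * (d + k)) * qq ^ (d + 2 * k + 1)"
  proof -
    have "Suc k * (d + Suc k) = k * (d + k) + (d + 2 * k + 1)" by (simp add: algebra_simps)
    then show ?thesis by (simp only: power_add)
  qed
  have i: "a' + b' + c + d + Suc k + Suc k = Suc (Suc (a' + b' + c + d + k + k))" by simp
  show ?thesis unfolding rho_def e i
    by (simp add: qfact_Suc qfact_nz field_simps mult_2 mult_2_right)
qed

lemma F_Suc: "qfact (Suc k) * qfact (a' + b' + c + d + Suc k) / qfact (Suc (a' + b' + c + d + Suc k) + Suc k)
   = (qfact k * qfact (a' + b' + c + d + k) / qfact (Suc (a' + b' + c + d + k) + k))
     * (qint (Suc k) * qint (Suc (a' + b' + c + d + k)) / (qint (Suc (Suc (a' + b' + c + d + 2 * k))) * qint (Suc (Suc (Suc (a' + b' + c + d + 2 * k))))))"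
proof -
  have i: "Suc (a' + b' + c + d + Suc k) + Suc k = Suc (Suc (Suc (a' + b' + c + d + k) + k))" by simp
  have j: "Suc (a' + b' + c + d + k) + k = Suc (a' + b' + c + d + 2 * k)" by simp
  show ?thesis unfolding i by (simp add: qfact_Suc qfact_nz field_simps j mult_2 mult_2_right)
qed

lemma Rr_Suc: "Rr (Suc k) = (qint (Suc k) * qint (Suc (a' + c + k)) * qint (Suc (b' + c + k)) * qint (Suc (a' + d + k))
        * qint (Suc (b' + d + k)) * qint (Suc (a' + b' + c + d + k)))
       / (qint (Suc (a' + b' + c + d + 2 * k)) * qint (Suc (Suc (a' + b' + c + d + 2 * k))) ^ 2
        * qint (Suc (Suc (Suc (a' + b' + c + d + 2 * k)))))"
proof -
  have i: "Suc a' + c + Suc k - 1 = Suc (a' + c + k)" "Suc b' + c + Suc k - 1 = Suc (b' + c + k)"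
     "Suc a' + d + Suc k - 1 = Suc (a' + d + k)" "Suc b' + d + Suc k - 1 = Suc (b' + d + k)"
     "Suc a' + Suc b' + c + d + Suc k - 2 = Suc (a' + b' + c + d + k)"
     "Suc a' + Suc b' + c + d + 2 * Suc k - 3 = Suc (a' + b' + c + d + 2 * k)"
     "Suc a' + Suc b' + c + d + 2 * Suc k - 2 = Suc (Suc (a' + b' + c + d + 2 * k))"
     "Suc a' + Suc b' + c + d + 2 * Suc k - 1 = Suc (Suc (Suc (a' + b' + c + d + 2 * k)))"
    by simp_all
  show ?thesis unfolding Rr_def i ..
qed

lemma ratio_alg:
  fixes K K' F F' t t' r r' x y z w :: qf
  assumes "K' = K * x" "F' = F * y" "t' = t * z" "r' = r * w" "t \<noteq> 0" "r \<noteq> 0" "z \<noteq> 0" "w \<noteq> 0"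
  shows "K' * F' / (t' * r') = K * F / (t * r) * (x * y / (z * w))"
  using assms by (simp add: field_simps)

lemma hh_Suc: "hh (Suc k) = hh k * (- (qq ^ (c + d)) * qq ^ k * Rr (Suc k))"
proof -
  have "hh (Suc k) = hh k * ((qq ^ c * qint (Suc (a' + d + k)) * qint (Suc (b' + d + k))) *
     (qint (Suc k) * qint (Suc (a' + b' + c + d + k)) / (qint (Suc (Suc (a' + b' + c + d + 2 * k))) * qint (Suc (Suc (Suc (a' + b' + c + d + 2 * k))))))
     / (- (qq ^ k) * (qq * qint (Suc (a' + b' + c + d + 2 * k)) * qint (Suc (Suc (a' + b' + c + d + 2 * k)))
   / (qq ^ (d + 2 * k + 1) * qint (Suc (a' + c + k)) * qint (Suc (b' + c + k))))))"
    unfolding hh_def by (rule ratio_alg[OF KK_Suc F_Suc tc_Suc rho_Suc tc_nz rho_nz]) simp_all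
  also have "\<dots> = hh k * (- (qq ^ (c + d)) * qq ^ k * Rr (Suc k))"
  proof -
    have p: "qq ^ (d + 2 * k + 1) = qq ^ d * qq ^ k * qq ^ k * qq" by (simp add: power_add mult_2)
    show ?thesis unfolding Rr_Suc p by (simp add: field_simps power_add power2_eq_square)
  qed
  finally show ?thesis .
qed

lemma hh_0: "hh 0 = Cabcd (Suc a') (Suc b') c d"
  unfolding hh_def C_closed[of "Suc a'" "Suc b'", simplified] KK_def rho_def
  by (simp add: tc_top qfact_Suc qfact_nz field_simps add_ac)

lemma choose2_Suc: "Suc k choose 2 = (k choose 2) + k"
  by (simp add: numeral_2_eq_2)
lemma choose3_Suc: "Suc k choose 3 = (k choose 3) + (k choose 2)"
  by (simp add: numeral_3_eq_3 numeral_2_eq_2)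

lemma hh_closed: "hh k = Cabcd (Suc a') (Suc b') c d * (- (qq ^ (c + d))) ^ k * qq ^ (k choose 2) * (\<Prod>i=1..k. Rr i)"
proof (induct k)
  case 0 then show ?case by (simp add: hh_0 numeral_2_eq_2)
next
  case (Suc k)
  show ?case unfolding hh_Suc Suc choose2_Suc
    by (simp add: prod.nat_ivl_Suc' power_add mult_ac)
qed

lemma prod_hh: "n \<ge> 1 \<Longrightarrow> (\<Prod>k<n. hh k) =
    (- (qq ^ (c + d))) ^ (n choose 2) * qq ^ (n choose 3) * Cabcd (Suc a') (Suc b') c d ^ n *
    (\<Prod>i=1..n-1. Rr i ^ (n - i))"
proof (induct n)
  case 0 then show ?case by simp
next
  case (Suc m)
  show ?case
  proof (cases m)
    case 0 then show ?thesis by (simp add: hh_0 numeral_2_eq_2 numeral_3_eq_3)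
  next
    case (Suc m')
    then have m1: "m \<ge> 1" by simp
    have p1: "(\<Prod>i=1..m. Rr i ^ (Suc m - i)) = (\<Prod>i=1..m. Rr i ^ (m - i)) * (\<Prod>i=1..m. Rr i)"
    proof -
      have "(\<Prod>i=1..m. Rr i ^ (Suc m - i)) = (\<Prod>i=1..m. Rr i ^ (m - i) * Rr i)"
        by (rule prod.cong) (auto simp: Suc_diff_le)
      then show ?thesis by (simp add: prod.distrib)
    qed
    have p2: "(\<Prod>i=1..m. Rr i ^ (m - i)) = (\<Prod>i=1..m-1. Rr i ^ (m - i))"
      using Suc by (simp add: prod.nat_ivl_Suc')
    have "(\<Prod>k<Suc m. hh k) = (\<Prod>k<m. hh k) * hh m" by simp
    also have "\<dots> = (- (qq ^ (c + d))) ^ (m choose 2) * qq ^ (m choose 3) * Cabcd (Suc a') (Suc b') c d ^ m *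
         (\<Prod>i=1..m-1. Rr i ^ (m - i)) * (Cabcd (Suc a') (Suc b') c d * (- (qq ^ (c + d))) ^ m * qq ^ (m choose 2) * (\<Prod>i=1..m. Rr i))"
      using Suc.hyps m1 by (simp add: hh_closed)
    also have "\<dots> = (- (qq ^ (c + d))) ^ (Suc m choose 2) * qq ^ (Suc m choose 3) * Cabcd (Suc a') (Suc b') c d ^ Suc m *
         (\<Prod>i=1..Suc m - 1. Rr i ^ (Suc m - i))"
    proof -
      have eq: "(\<Prod>i=1..Suc m - 1. Rr i ^ (Suc m - i)) = (\<Prod>i=1..m-1. Rr i ^ (m - i)) * (\<Prod>i=1..m. Rr i)"
        by (simp only: diff_Suc_1 p1 p2)
      show ?thesis unfolding choose2_Suc choose3_Suc eq by (simp add: power_add mult_ac)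
    qed
    finally show ?thesis .
  qed
qed

end

lemma det_prod_hh:
  "det (mat n n (\<lambda>(i, j). Psi (monom 1 (i + j) * X0 a' b' c d))) = (\<Prod>k<n. hh a' b' c d k)"
proof -
  have H: "(\<Prod>j<n. coeff (ext d j) j) * det (mat n n (\<lambda>(i, j). Psi (monom 1 (i + j) * X0 a' b' c d))) * (\<Prod>k<n. coeff (Pk a' b' c d k) k)
       = (\<Prod>k<n. Psi (ext d k * Pk a' b' c d k * X0 a' b' c d))"
    by (rule hankel_det) (simp_all add: ext_deg Pk_deg orth_val)
  define D where "D = det (mat n n (\<lambda>(i, j). Psi (monom 1 (i + j) * X0 a' b' c d)))"
  have l: "(\<Prod>j<n. coeff (ext d j) j) * (\<Prod>k<n. coeff (Pk a' b' c d k) k) = (\<Prod>k<n. tc k k * rho a' b' c d k k)"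
    unfolding prod.distrib[symmetric] Pk_lead by (rule prod.cong) (simp_all add: ext_deg power_add[symmetric] mult_ac)
  have nz: "(\<Prod>k<n. tc k k * rho a' b' c d k k) \<noteq> 0" by (simp add: tc_nz rho_nz)
  have "D * (\<Prod>k<n. tc k k * rho a' b' c d k k) = (\<Prod>k<n. Psi (ext d k * Pk a' b' c d k * X0 a' b' c d))"
    using H l unfolding D_def[symmetric] by (simp add: mult_ac)
  then have "D = (\<Prod>k<n. Psi (ext d k * Pk a' b' c d k * X0 a' b' c d)) / (\<Prod>k<n. tc k k * rho a' b' c d k k)"
    using nz by (simp add: field_simps)
  also have "\<dots> = (\<Prod>k<n. hh a' b' c d k)"
    unfolding prod_dividef[symmetric] hh_def diag_val ..
  finally show ?thesis unfolding D_def .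
qed


theorem mainTheorem13:
  fixes a b c d n :: nat
  assumes "a \<ge> 1" and "b \<ge> 1" and "n \<ge> 1"
  shows "det (Mmat a b c d n) =
    (- (qq ^ (c + d))) ^ (n choose 2) * qq ^ (n choose 3) * Cabcd a b c d ^ n *
    (\<Prod>i=1..n-1.
      ((qint i * qint (a + c + i - 1) * qint (b + c + i - 1) * qint (a + d + i - 1)
        * qint (b + d + i - 1) * qint (a + b + c + d + i - 2))
       / (qint (a + b + c + d + 2 * i - 3) * qint (a + b + c + d + 2 * i - 2) ^ 2
        * qint (a + b + c + d + 2 * i - 1))) ^ (n - i))"
proof -
  obtain a' where a: "a = Suc a'" using assms(1) by (metis Suc_le_D One_nat_def)
  obtain b' where b: "b = Suc b'" using assms(2) by (metis Suc_le_D One_nat_def)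
  have X: "x2W a b c d = X0 a' b' c d" unfolding x2W_def X0_def a b by simp
  have "det (Mmat a b c d n) = (\<Prod>k<n. hh a' b' c d k)"
    unfolding Mmat_def X by (rule det_prod_hh)
  also have "\<dots> = (- (qq ^ (c + d))) ^ (n choose 2) * qq ^ (n choose 3) * Cabcd (Suc a') (Suc b') c d ^ n *
    (\<Prod>i=1..n-1. Rr a' b' c d i ^ (n - i))"
    by (rule prod_hh) (rule assms(3))
  finally show ?thesis unfolding a b Rr_def .
qed

end
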